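(* With $S_1,S_2$ as in the context, $$S_1(q)=(-q^3;q^3)_\infty \sum_{i,j\geq 0} \frac{q^{\frac{1}{2}i^2+2ij+2j^2-\frac{1}{2}i+2j}}{(q^3;q^3)_i(q^6;q^6)_j},\qquad S_2(q)=(-q^3;q^3)_\infty \sum_{i,j\geq 0} \frac{q^{\frac{1}{2}i^2+2ij+2j^2+\frac{3}{2}i}}{(q^3;q^3)_i(q^6;q^6)_j}.$$
   Context: Let $|q|<1$ and use standard $q$-Pochhammer notation $(a;q)_n=\prod_{k=0}^{n-1}(1-aq^k)$, $(a;q)_\infty=\prod_{k\ge0}(1-aq^k)$. Define $$S_1(q)=\sum_{i,j\geq 0}\frac{q^{\frac{1}{2}i^2-ij+2j^2-\frac{1}{2}i+2j}}{(q^3;q^3)_i(q^3;q^3)_j},\qquad S_2(q)=\sum_{i,j\geq 0}\frac{q^{\frac{1}{2}i^2-ij+2j^2+\frac{3}{2}i}}{(q^3;q^3)_i (q^3;q^3)_j}.$$ *)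

theory Defs
  imports "HOL-Analysis.Analysis"
begin

definition qpoch :: "complex \<Rightarrow> complex \<Rightarrow> nat \<Rightarrow> complex" where
  "qpoch a q n = (\<Prod>k<n. 1 - a * q ^ k)"

definition qpoch_inf :: "complex \<Rightarrow> complex \<Rightarrow> complex" where
  "qpoch_inf a q = (\<Prod>k. 1 - a * q ^ k)"

text \<open>Exponents, written with integer arithmetic:
  i^2/2 - i j + 2 j^2 - i/2 + 2j  =  i(i-1)/2 - i j + 2 j^2 + 2 j, etc.\<close>

definition S1 :: "complex \<Rightarrow> complex" where
  "S1 q = (\<Sum>\<^sub>\<infinity>(i,j)\<in>UNIV.
     q powi ((int i * (int i - 1)) div 2 - int i * int j + 2 * (int j)^2 + 2 * int j)
     / (qpoch (q^3) (q^3) i * qpoch (q^3) (q^3) j))"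

definition S2 :: "complex \<Rightarrow> complex" where
  "S2 q = (\<Sum>\<^sub>\<infinity>(i,j)\<in>UNIV.
     q powi ((int i * (int i + 3)) div 2 - int i * int j + 2 * (int j)^2)
     / (qpoch (q^3) (q^3) i * qpoch (q^3) (q^3) j))"

end

theory Submission
  imports Defs
begin

lemma qpoch_Suc: "qpoch a q (Suc n) = qpoch a q n * (1 - a * q ^ n)"
  by (simp add: qpoch_def)

lemma qpoch_0[simp]: "qpoch a q 0 = 1"
  by (simp add: qpoch_def)

lemma qpoch_xx_Suc: "qpoch x x (Suc n) = qpoch x x n * (1 - x ^ Suc n)"
  by (simp add: qpoch_Suc)

lemma pow_Suc_ne1: assumes "norm x < (1::real)" shows "(x::complex) ^ Suc n \<noteq> 1"
proof -
  have "norm x ^ Suc n < 1" using assms power_less_one_iff[of "norm x" "Suc n"] by (simp del: power_Suc)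
  then have "norm (x ^ Suc n) < 1" by (simp only: norm_power)
  then show ?thesis by auto
qed

lemma qpoch_xx_nz: assumes "norm x < (1::real)" shows "qpoch x x n \<noteq> 0"
proof (induction n)
  case (Suc n)
  then show ?case using pow_Suc_ne1[OF assms, of n] by (simp only: qpoch_xx_Suc) simp
qed simp

definition dt :: "complex \<Rightarrow> nat \<Rightarrow> nat \<Rightarrow> nat \<Rightarrow> complex" where
  "dt x a b k = (if k \<le> b then x^((a-k)*(b-k)) * qpoch x x a /
      (qpoch x x (a-k) * qpoch x x (b-k) * qpoch x x k) else 0)"

lemma alg1:
  fixes W Z Pa Pm Pd Pk X Y :: complex
  assumes "Pm \<noteq> 0" "Pd \<noteq> 0" "Pk \<noteq> 0" "1 - X \<noteq> 0" "1 - Y \<noteq> 0"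
  shows "(W * Z) * (Pa * (1 - X * Y)) / (Pm * (1 - Y) * Pd * (Pk * (1 - X))) =
     (X * Z) * (W * Pa / (Pm * Pd * (Pk * (1 - X)))) + (W * Z) * Pa / (Pm * (1 - Y) * Pd * Pk)"
proof -
  have "(X * Z) * (W * Pa / (Pm * Pd * (Pk * (1 - X)))) + (W * Z) * Pa / (Pm * (1 - Y) * Pd * Pk)
     = (W*Z*Pa) * (X * (1 - Y) + (1 - X)) / (Pm * (1 - Y) * Pd * (Pk * (1 - X)))"
    using assms by (simp add: divide_simps) (simp add: algebra_simps)
  also have "X * (1 - Y) + (1 - X) = 1 - X * Y" by (simp add: algebra_simps)
  finally show ?thesis by simp
qed

lemma pascal_core:
  fixes x :: complex
  assumes x: "norm x < 1"
  shows "dt x (Suc (k + Suc m)) (Suc (k + d)) (Suc k) =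
     x ^ Suc (k + d) * dt x (k + Suc m) (Suc (k + d)) (Suc k) + dt x (k + Suc m) (k + d) k"
proof -
  define a where "a = k + Suc m"
  define P where "P = qpoch x x"
  have nz: "P n \<noteq> 0" for n unfolding P_def by (rule qpoch_xx_nz[OF x])
  have X: "1 - x ^ Suc k \<noteq> 0" and Y: "1 - x ^ Suc m \<noteq> 0"
    using pow_Suc_ne1[OF x] by auto
  have e1: "dt x (Suc a) (Suc (k + d)) (Suc k) = x^(Suc m * d) * (P a * (1 - x ^ Suc a)) /
      (P m * (1 - x^Suc m) * P d * (P k * (1 - x^Suc k)))"
    unfolding dt_def P_def a_def by (simp add: qpoch_xx_Suc)
  have e2: "dt x a (Suc (k + d)) (Suc k) = x^(m*d) * P a / (P m * P d * (P k * (1 - x^Suc k)))"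
    unfolding dt_def P_def a_def by (simp add: qpoch_xx_Suc)
  have e3: "dt x a (k + d) k = x^(Suc m * d) * P a / (P m * (1 - x^Suc m) * P d * P k)"
    unfolding dt_def P_def a_def by (simp add: qpoch_xx_Suc)
  have pa: "x ^ Suc a = x^Suc k * x ^ Suc m" unfolding a_def by (simp add: power_add[symmetric])
  have p1: "x ^ Suc (k+d) = x^Suc k * x^d" by (simp add: power_add[symmetric])
  have p2: "x^(Suc m * d) = x^(m*d) * x^d" by (simp add: power_add[symmetric] add.commute)
  show ?thesis
    unfolding a_def[symmetric] e1 e2 e3 pa p1 p2
    using alg1[OF nz nz nz X Y, of "x^(m*d)" "x^d" "P a"] by simp
qed


definition U :: "complex \<Rightarrow> nat \<Rightarrow> nat \<Rightarrow> complex" where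
  "U x a b = (\<Sum>k\<le>a. dt x a b k)"

lemma dt_split:
  fixes x :: complex
  assumes x: "norm x < 1" and k: "k \<le> Suc a"
  shows "dt x (Suc a) (Suc b) k =
    (if k \<le> a then x ^ Suc b * dt x a (Suc b) k else 0) + (if k = 0 then 0 else dt x a b (k - 1))"
proof -
  define P where "P = qpoch x x"
  have nz: "P n \<noteq> 0" for n unfolding P_def by (rule qpoch_xx_nz[OF x])
  have P0: "P 0 = 1" by (simp add: P_def)
  show ?thesis
  proof (cases k)
    case 0
    have l1: "dt x (Suc a) (Suc b) 0 = x ^ (Suc a * Suc b) / P (Suc b)"
      using nz P0 unfolding dt_def P_def[symmetric] by (simp del: mult_Suc mult_Suc_right)
    have l2: "dt x a (Suc b) 0 = x ^ (a * Suc b) / P (Suc b)"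
      using nz P0 unfolding dt_def P_def[symmetric] by (simp del: mult_Suc mult_Suc_right)
    have l3: "x ^ (Suc a * Suc b) = x ^ Suc b * x ^ (a * Suc b)"
      by (simp only: mult_Suc power_add)
    show ?thesis unfolding 0 l1 l2 l3 by simp
  next
    case (Suc k')
    show ?thesis
    proof (cases "k' \<le> b")
      case kb: True
      show ?thesis
      proof (cases "k' < a")
        case True
        define m where "m = a - k' - 1"
        define d where "d = b - k'"
        have am: "a = k' + Suc m" using True unfolding m_def by simp
        have bd: "b = k' + d" using kb unfolding d_def by simp
        have "dt x (Suc a) (Suc b) (Suc k') = x ^ Suc b * dt x a (Suc b) (Suc k') + dt x a b k'"
          using pascal_core[OF x, of k' m d] unfolding am bd by simp
        then show ?thesis using True Suc by simp
      next
        case False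
        then have ka: "k' = a" using k Suc by simp
        show ?thesis using nz kb P0 unfolding Suc ka dt_def P_def[symmetric] by simp
      qed
    next
      case False
      then show ?thesis unfolding Suc dt_def by simp
    qed
  qed
qed

lemma alg2:
  fixes P X :: complex
  assumes "P \<noteq> 0" "1 - X \<noteq> 0"
  shows "X * (1 / (P * (1 - X))) + 1 / P = 1 / (P * (1 - X))"
proof -
  have "X * (1 / (P * (1 - X))) + 1 / P = (X + (1 - X)) / (P * (1 - X))"
    using assms by (simp add: divide_simps)
  then show ?thesis by simp
qed

lemma U_eq:
  fixes x :: complex
  assumes x: "norm x < 1"
  shows "U x a b = 1 / qpoch x x b"
proof (induction a arbitrary: b)
  case 0
  then show ?case using qpoch_xx_nz[OF x] by (simp add: U_def dt_def)
next
  case (Suc a)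
  note IH = Suc
  have nz: "qpoch x x n \<noteq> 0" for n by (rule qpoch_xx_nz[OF x])
  show ?case
  proof (cases b)
    case 0
    have "U x (Suc a) 0 = dt x (Suc a) 0 0 + (\<Sum>k\<le>a. dt x (Suc a) 0 (Suc k))"
      unfolding U_def by (rule sum.atMost_Suc_shift)
    also have "(\<Sum>k\<le>a. dt x (Suc a) 0 (Suc k)) = 0" by (simp add: dt_def)
    finally show ?thesis using 0 nz by (simp add: dt_def)
  next
    case (Suc b')
    have "U x (Suc a) (Suc b') = (\<Sum>k\<le>Suc a.
      (if k \<le> a then x ^ Suc b' * dt x a (Suc b') k else 0) + (if k = 0 then 0 else dt x a b' (k - 1)))"
      unfolding U_def by (rule sum.cong[OF refl], rule dt_split[OF x], simp)
    also have "\<dots> = (\<Sum>k\<le>Suc a. (if k \<le> a then x ^ Suc b' * dt x a (Suc b') k else 0))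
        + (\<Sum>k\<le>Suc a. (if k = 0 then 0 else dt x a b' (k - 1)))"
      by (rule sum.distrib)
    also have "(\<Sum>k\<le>Suc a. (if k \<le> a then x ^ Suc b' * dt x a (Suc b') k else 0))
        = x ^ Suc b' * U x a (Suc b')"
      by (simp add: U_def sum_distrib_left)
    also have "(\<Sum>k\<le>Suc a. (if k = 0 then 0 else dt x a b' (k - 1))) = U x a b'"
      unfolding U_def by (subst sum.atMost_Suc_shift) simp
    also have "x ^ Suc b' * U x a (Suc b') + U x a b' = 1 / qpoch x x (Suc b')"
      unfolding IH qpoch_xx_Suc using alg2[OF nz[of b'], of "x ^ Suc b'"] pow_Suc_ne1[OF x, of b']
      by simp
    finally show ?thesis using Suc by simp
  qed
qed


lemma durfee:
  fixes x :: complex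
  assumes x: "norm x < 1"
  shows "(\<Sum>k\<le>min a b. x^((a-k)*(b-k)) / (qpoch x x (a-k) * qpoch x x (b-k) * qpoch x x k))
     = 1 / (qpoch x x a * qpoch x x b)"
proof -
  have nz: "qpoch x x n \<noteq> 0" for n by (rule qpoch_xx_nz[OF x])
  have "U x a b / qpoch x x a = (\<Sum>k\<le>a. dt x a b k / qpoch x x a)"
    unfolding U_def by (simp add: sum_divide_distrib)
  also have "\<dots> = (\<Sum>k\<le>a. if k \<le> b then x^((a-k)*(b-k)) / (qpoch x x (a-k) * qpoch x x (b-k) * qpoch x x k) else 0)"
    using nz by (intro sum.cong refl) (simp add: dt_def)
  also have "\<dots> = (\<Sum>k\<in>{k\<in>{..a}. k \<le> b}. x^((a-k)*(b-k)) / (qpoch x x (a-k) * qpoch x x (b-k) * qpoch x x k))"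
    by (rule sum.inter_filter[symmetric]) simp
  also have "{k\<in>{..a}. k \<le> b} = {..min a b}" by auto
  finally show ?thesis using U_eq[OF x, of a b] by (simp add: mult.commute)
qed

definition tri :: "nat \<Rightarrow> nat" where "tri n = (\<Sum>i<n. i)"

lemma tri_Suc: "tri (Suc n) = tri n + n" by (simp add: tri_def)
lemma tri_0[simp]: "tri 0 = 0" by (simp add: tri_def)

lemma two_tri: "2 * tri n = n * (n - 1)"
proof (induction n)
  case (Suc n)
  then show ?case by (cases n) (simp_all add: tri_Suc algebra_simps)
qed simp

lemma summable_M:
  fixes \<rho> C :: real
  assumes "0 \<le> \<rho>" "\<rho> < 1" "0 \<le> C"
  shows "summable (\<lambda>n. \<rho> ^ tri n * C ^ n)"
proof -
  have "(\<lambda>n. \<rho> ^ n * C) \<longlonglongrightarrow> 0 * C"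
    by (intro tendsto_intros) (use assms in simp)
  then have "eventually (\<lambda>n. \<rho> ^ n * C < 1/2) sequentially"
    by (rule order_tendstoD) simp
  then obtain N where N: "\<And>n. n \<ge> N \<Longrightarrow> \<rho> ^ n * C < 1/2"
    by (auto simp: eventually_sequentially)
  show ?thesis
  proof (rule summable_ratio_test[of "1/2" N])
    fix n assume n: "n \<ge> N"
    have eq: "\<rho> ^ tri (Suc n) * C ^ Suc n = (\<rho> ^ n * C) * (\<rho> ^ tri n * C ^ n)"
      by (simp add: tri_Suc power_add)
    have nn: "0 \<le> \<rho> ^ tri n * C ^ n" using assms by simp
    have "(\<rho> ^ n * C) * (\<rho> ^ tri n * C ^ n) \<le> 1/2 * (\<rho> ^ tri n * C ^ n)"
      using N[OF n] nn by (intro mult_right_mono) auto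
    then show "norm (\<rho> ^ tri (Suc n) * C ^ Suc n) \<le> 1/2 * norm (\<rho> ^ tri n * C ^ n)"
      using nn assms unfolding eq by simp
  qed simp
qed

lemma poch_norm_lower:
  fixes x :: complex
  assumes x: "norm x < 1"
  shows "(1 - norm x) ^ n \<le> norm (qpoch x x n)"
proof -
  have "(1 - norm x) ^ n = (\<Prod>k<n. (1 - norm x))" by simp
  also have "\<dots> \<le> (\<Prod>k<n. norm (1 - x * x ^ k))"
  proof (rule prod_mono)
    fix k assume "k \<in> {..<n}"
    have "norm (x * x ^ k) = norm x * norm x ^ k" by (simp add: norm_mult norm_power)
    also have "\<dots> \<le> norm x * 1" using x by (intro mult_left_mono power_le_one) auto
    finally have "norm (x * x^k) \<le> norm x" by simp
    moreover have "1 - norm (x * x^k) \<le> norm (1 - x * x ^ k)"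
      using norm_triangle_ineq2[of 1 "x * x^k"] by simp
    ultimately show "0 \<le> 1 - norm x \<and> 1 - norm x \<le> norm (1 - x * x ^ k)" using x by auto
  qed
  also have "\<dots> = norm (qpoch x x n)" unfolding qpoch_def by (simp add: prod_norm)
  finally show ?thesis .
qed

lemma inv_poch_bound:
  fixes x :: complex
  assumes x: "norm x < 1"
  shows "norm (1 / qpoch x x n) \<le> (1 / (1 - norm x)) ^ n"
proof -
  have pos: "0 < (1 - norm x) ^ n" using x by simp
  have "norm (1 / qpoch x x n) = 1 / norm (qpoch x x n)" by (simp add: norm_divide)
  also have "\<dots> \<le> 1 / (1 - norm x) ^ n"
  proof (rule divide_left_mono)
    show "(1 - norm x) ^ n \<le> norm (qpoch x x n)" by (rule poch_norm_lower[OF x])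
    have "0 < norm (qpoch x x n)" using poch_norm_lower[OF x, of n] pos by linarith
    then show "0 < norm (qpoch x x n) * (1 - norm x) ^ n" using pos by simp
  qed simp
  finally show ?thesis by (simp add: power_one_over)
qed


definition ec :: "complex \<Rightarrow> nat \<Rightarrow> complex" where
  "ec x n = x ^ tri (Suc n) / qpoch x x n"

definition gE :: "complex \<Rightarrow> complex \<Rightarrow> complex" where
  "gE x z = (\<Sum>n. ec x n * z ^ n)"

lemma ec_bound:
  fixes x z :: complex
  assumes x: "norm x < 1"
  shows "norm (ec x n * z ^ n) \<le> norm x ^ tri n * (norm z / (1 - norm x)) ^ n"
proof -
  have "norm (ec x n * z ^ n) = norm x ^ tri n * norm x ^ n * norm (1 / qpoch x x n) * norm z ^ n"
    by (simp add: ec_def norm_mult norm_divide norm_power tri_Suc power_add)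
  also have "\<dots> \<le> norm x ^ tri n * 1 * (1 / (1 - norm x)) ^ n * norm z ^ n"
    using x inv_poch_bound[OF x, of n]
    by (intro mult_right_mono mult_mono power_le_one) auto
  also have "\<dots> = norm x ^ tri n * (norm z / (1 - norm x)) ^ n"
    by (simp add: power_divide)
  finally show ?thesis .
qed

lemma ec_summable:
  fixes x z :: complex
  assumes x: "norm x < 1"
  shows "summable (\<lambda>n. norm (ec x n * z ^ n))"
proof (rule summable_comparison_test[OF _ summable_M])
  show "\<exists>N. \<forall>n\<ge>N. norm (norm (ec x n * z ^ n)) \<le> norm x ^ tri n * (norm z / (1 - norm x)) ^ n"
    using ec_bound[OF x] by auto
qed (use x in auto)

lemma ec_summable': "norm x < 1 \<Longrightarrow> summable (\<lambda>n. ec x n * z ^ n)"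
  by (rule summable_norm_cancel[OF ec_summable])

lemma gE_fe:
  fixes x z :: complex
  assumes x: "norm x < 1"
  shows "gE x z = (1 + x * z) * gE x (x * z)"
proof -
  define d where "d n = ec x n * z ^ n - ec x n * (x * z) ^ n" for n
  have s1: "summable (\<lambda>n. ec x n * z ^ n)" and s2: "summable (\<lambda>n. ec x n * (x*z) ^ n)"
    using ec_summable'[OF x] by auto
  have sd: "summable d" unfolding d_def using s1 s2 by (rule summable_diff)
  have diff: "gE x z - gE x (x*z) = suminf d"
    unfolding gE_def d_def using s1 s2 by (rule suminf_diff)
  have d0: "d 0 = 0" by (simp add: d_def)
  have dS: "d (Suc n) = x * z * (ec x n * (x * z) ^ n)" for n
  proof -
    have nz: "qpoch x x n \<noteq> 0" by (rule qpoch_xx_nz[OF x])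
    have X: "1 - x ^ Suc n \<noteq> 0" using pow_Suc_ne1[OF x, of n] by simp
    define A where "A = x ^ tri (Suc (Suc n))"
    have "d (Suc n) = ec x (Suc n) * (z ^ Suc n - (x * z) ^ Suc n)"
      unfolding d_def by (simp only: right_diff_distrib)
    also have "\<dots> = A / (qpoch x x n * (1 - x ^ Suc n)) * (z ^ Suc n - x ^ Suc n * z ^ Suc n)"
      by (simp only: ec_def A_def qpoch_xx_Suc power_mult_distrib)
    also have "\<dots> = A * z ^ Suc n / qpoch x x n"
      using nz X by (simp add: field_simps)
    also have "A * z ^ Suc n = x * z * (x ^ tri (Suc n) * (x ^ n * z ^ n))"
      unfolding A_def by (simp add: tri_Suc power_add)
    finally show ?thesis unfolding ec_def power_mult_distrib by simp
  qed
  have "suminf d = d 0 + (\<Sum>n. d (Suc n))" using suminf_split_head[OF sd] by simp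
  also have "\<dots> = x * z * gE x (x * z)"
    unfolding d0 dS gE_def using s2 by (simp add: suminf_mult)
  finally show ?thesis using diff by (simp add: algebra_simps)
qed

lemma gE_iter:
  fixes x :: complex
  assumes x: "norm x < 1"
  shows "gE x 1 = qpoch (- x) x j * gE x (x ^ j)"
proof (induction j)
  case 0
  then show ?case by simp
next
  case (Suc j)
  have "gE x (x ^ j) = (1 + x * x ^ j) * gE x (x * x ^ j)" by (rule gE_fe[OF x])
  then show ?case using Suc by (simp add: qpoch_Suc)
qed

lemma gE_0: "gE x 0 = 1"
  unfolding gE_def using powser_zero[of "ec x"] by (simp add: ec_def tri_def)

lemma gE_lim:
  fixes x :: complex
  assumes x: "norm x < 1"
  shows "(\<lambda>j. gE x (x ^ j)) \<longlonglongrightarrow> 1"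
proof -
  have "isCont (\<lambda>z. \<Sum>n. ec x n * z ^ n) 0"
    by (rule isCont_powser[of _ 1]) (use ec_summable'[OF x, of 1] in auto)
  then have "isCont (gE x) 0" unfolding gE_def by simp
  from isCont_tendsto_compose[OF this LIMSEQ_power_zero[OF x]]
  show ?thesis by (simp add: gE_0)
qed

lemma qp_nz:
  fixes x :: complex
  assumes x: "norm x < 1"
  shows "qpoch (- x) x j \<noteq> 0"
  unfolding qpoch_def prod_zero_iff[OF finite_lessThan]
proof (intro notI, elim bexE)
  fix k assume "k \<in> {..<j}" and eq0: "1 - - x * x ^ k = 0"
  have "norm (x ^ Suc k) < 1"
    using x power_less_one_iff[of "norm x" "Suc k"] by (simp add: norm_power del: power_Suc)
  then have "x ^ Suc k \<noteq> -1" by auto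
  then show False using eq0 by (auto simp: add_eq_0_iff)
qed

lemma Pinf_eq:
  fixes x :: complex
  assumes x: "norm x < 1"
  shows "qpoch_inf (- x) x = gE x 1" and "gE x 1 \<noteq> 0"
proof -
  have ev: "eventually (\<lambda>j. gE x (x ^ j) \<noteq> 0) sequentially"
    using tendsto_imp_eventually_ne[OF gE_lim[OF x], of 0] by simp
  then obtain J where "gE x (x ^ J) \<noteq> 0" by (auto simp: eventually_sequentially)
  then show nz: "gE x 1 \<noteq> 0" using gE_iter[OF x, of J] qp_nz[OF x, of J] by simp
  have "(\<lambda>j. gE x 1 / gE x (x ^ j)) \<longlonglongrightarrow> gE x 1 / 1"
    by (intro tendsto_intros gE_lim[OF x]) simp
  moreover have "eventually (\<lambda>j. gE x 1 / gE x (x ^ j) = qpoch (- x) x j) sequentially"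
  proof (rule eventually_mono[OF ev])
    fix j assume "gE x (x ^ j) \<noteq> 0"
    then show "gE x 1 / gE x (x ^ j) = qpoch (- x) x j" using gE_iter[OF x, of j] by simp
  qed
  ultimately have "(\<lambda>j. qpoch (- x) x j) \<longlonglongrightarrow> gE x 1 / 1"
    by (rule Lim_transform_eventually)
  then have lim: "(\<lambda>n. qpoch (- x) x (Suc n)) \<longlonglongrightarrow> gE x 1" using LIMSEQ_Suc by fastforce
  have "(\<lambda>n. \<Prod>i\<le>n. (\<lambda>k. 1 - - x * x ^ k) (i + 0)) = (\<lambda>n. qpoch (- x) x (Suc n))"
    by (simp add: qpoch_def lessThan_Suc_atMost)
  then have "raw_has_prod (\<lambda>k. 1 - - x * x ^ k) 0 (gE x 1)"
    unfolding raw_has_prod_def using lim nz by simp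
  then have "(\<lambda>k. 1 - - x * x ^ k) has_prod gE x 1" unfolding has_prod_def by simp
  then show "qpoch_inf (- x) x = gE x 1"
    unfolding qpoch_inf_def by (rule has_prod_unique[symmetric])
qed


lemma q6_split:
  fixes q :: complex
  shows "qpoch (q^6) (q^6) j = qpoch (q^3) (q^3) j * qpoch (- (q^3)) (q^3) j"
  unfolding qpoch_def prod.distrib[symmetric]
proof (rule prod.cong[OF refl])
  fix k
  have e6: "q^6 = q^3 * q^3" by (simp add: power_add[symmetric])
  have "(q^6)^k = (q^3)^k * (q^3)^k" unfolding e6 by (rule power_mult_distrib)
  then show "1 - q ^ 6 * (q ^ 6) ^ k = (1 - q ^ 3 * (q ^ 3) ^ k) * (1 - - (q ^ 3) * (q ^ 3) ^ k)"
    unfolding e6 by (simp add: algebra_simps)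
qed

lemma prod_summable_real:
  fixes F :: "'a \<Rightarrow> real" and G :: "'b \<Rightarrow> real"
  assumes F: "F summable_on UNIV" and G: "G summable_on UNIV"
    and Fn: "\<And>a. 0 \<le> F a" and Gn: "\<And>b. 0 \<le> G b"
  shows "(\<lambda>(a,b). F a * G b) summable_on UNIV"
proof -
  have "(\<lambda>(a,b). F a * G b) summable_on Sigma UNIV (\<lambda>_. UNIV)"
  proof (rule summable_on_SigmaI[where g = "\<lambda>a. F a * infsum G UNIV"])
    fix a :: 'a
    show "((\<lambda>y. case (a, y) of (a, b) \<Rightarrow> F a * G b) has_sum F a * infsum G UNIV) UNIV"
      using has_sum_cmult_right[OF has_sum_infsum[OF G], of "F a"] by simp
  next
    show "(\<lambda>a. F a * infsum G UNIV) summable_on UNIV"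
      using summable_on_cmult_left[OF F] by simp
  next
    fix a b show "0 \<le> (case (a, b) of (a, b) \<Rightarrow> F a * G b)" using Fn Gn by simp
  qed
  then show ?thesis by simp
qed

lemma M_summable_on:
  fixes \<rho> C :: real
  assumes "0 \<le> \<rho>" "\<rho> < 1" "0 \<le> C"
  shows "(\<lambda>n. \<rho> ^ tri n * C ^ n) summable_on UNIV"
proof (rule norm_summable_imp_summable_on)
  show "summable (\<lambda>n. norm (\<rho> ^ tri n * C ^ n))"
    using summable_M[OF assms] assms by simp
qed


definition uu :: "complex \<Rightarrow> (nat \<Rightarrow> nat \<Rightarrow> int) \<Rightarrow> (nat \<times> nat) \<times> nat \<Rightarrow> complex" where
  "uu q eR p = (case p of ((i,j),k) \<Rightarrow> q ^ nat (eR i j) * (q^3) ^ (tri (Suc k) + j * k) /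
      (qpoch (q^3) (q^3) i * qpoch (q^3) (q^3) j * qpoch (q^3) (q^3) k))"

lemma norm_q3: "norm (q^3 :: complex) = norm q ^ 3" by (simp add: norm_power)

lemma q3_lt1: "norm (q::complex) < 1 \<Longrightarrow> norm (q^3) < 1"
  unfolding norm_q3 by (simp add: power_less_one_iff)

lemma uu_bound:
  fixes q :: complex and eR :: "nat \<Rightarrow> nat \<Rightarrow> int"
  assumes q: "norm q < 1"
    and hR: "\<And>i j. int (i*(i-1)) + int (j*(j-1)) \<le> 2 * eR i j"
  defines "C \<equiv> 1 / (1 - norm (q^3))"
  shows "norm (uu q eR ((i,j),k)) \<le>
     (norm q ^ tri i * C ^ i) * (norm q ^ tri j * C ^ j) * (norm q ^ tri k * C ^ k)"
proof -
  define r where "r = norm q"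
  define P where "P = qpoch (q^3) (q^3)"
  have x: "norm (q^3) < 1" by (rule q3_lt1[OF q])
  have r0: "0 \<le> r" and r1: "r \<le> 1" using q unfolding r_def by auto
  have C0: "0 \<le> C" unfolding C_def using x by simp
  have e1: "tri i + tri j \<le> nat (eR i j)"
  proof -
    have "int (2 * tri i) + int (2 * tri j) \<le> 2 * eR i j" unfolding two_tri using hR[of i j] .
    then show ?thesis by linarith
  qed
  have e2: "tri k \<le> 3 * (tri (Suc k) + j * k)" by (simp add: tri_Suc)
  have "norm (uu q eR ((i,j),k)) = (r ^ nat (eR i j) * r ^ (3 * (tri (Suc k) + j * k))) *
        (norm (1 / P i) * norm (1 / P j) * norm (1 / P k))"
  proof -
    have pm: "norm ((q^3)^m) = r ^ (3*m)" for m unfolding r_def by (simp add: norm_power power_mult)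
    have pn: "norm (q ^ m) = r ^ m" for m unfolding r_def by (simp add: norm_power)
    show ?thesis unfolding uu_def P_def
      by (simp only: prod.case norm_mult norm_divide pm pn) (simp add: divide_inverse)
  qed
  also have "\<dots> \<le> (r ^ (tri i + tri j) * r ^ tri k) * (C ^ i * C ^ j * C ^ k)"
  proof (rule mult_mono)
    show "r ^ nat (eR i j) * r ^ (3 * (tri (Suc k) + j * k)) \<le> r ^ (tri i + tri j) * r ^ tri k"
      using r0 r1 e1 e2 by (intro mult_mono power_decreasing) auto
    show "norm (1 / P i) * norm (1 / P j) * norm (1 / P k) \<le> C ^ i * C ^ j * C ^ k"
      using inv_poch_bound[OF x] C0 unfolding P_def C_def[symmetric]
      by (intro mult_mono) auto
  qed (use r0 C0 in auto)
  also have "\<dots> = (r ^ tri i * C ^ i) * (r ^ tri j * C ^ j) * (r ^ tri k * C ^ k)"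
    by (simp add: power_add algebra_simps)
  finally show ?thesis unfolding r_def .
qed

lemma uu_summable:
  fixes q :: complex and eR :: "nat \<Rightarrow> nat \<Rightarrow> int"
  assumes q: "norm q < 1"
    and hR: "\<And>i j. int (i*(i-1)) + int (j*(j-1)) \<le> 2 * eR i j"
  shows "uu q eR summable_on UNIV"
proof -
  define C where "C = 1 / (1 - norm (q^3))"
  define M where "M n = norm q ^ tri n * C ^ n" for n
  have x: "norm (q^3) < 1" by (rule q3_lt1[OF q])
  have C0: "0 \<le> C" unfolding C_def using x by simp
  have Ms: "M summable_on UNIV" unfolding M_def using q C0 by (intro M_summable_on) auto
  have M0: "0 \<le> M n" for n unfolding M_def using C0 by simp
  have "(\<lambda>(a,b). M a * M b) summable_on UNIV" by (rule prod_summable_real[OF Ms Ms M0 M0])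
  then have "(\<lambda>(ab,c). (case ab of (a,b) \<Rightarrow> M a * M b) * M c) summable_on UNIV"
    by (rule prod_summable_real[OF _ Ms]) (use M0 in \<open>auto intro: mult_nonneg_nonneg\<close>)
  then have maj: "(\<lambda>((a,b),c). M a * M b * M c) summable_on UNIV"
    by (simp add: case_prod_beta')
  have "Infinite_Sum.abs_summable_on (uu q eR) UNIV"
  proof (rule Infinite_Sum.abs_summable_on_comparison_test)
    show "Infinite_Sum.abs_summable_on (\<lambda>((a,b),c). M a * M b * M c) UNIV"
      using maj M0 by (simp add: case_prod_beta' abs_mult)
    fix p :: "(nat \<times> nat) \<times> nat"
    obtain i j k where p: "p = ((i,j),k)" by (metis prod.collapse)
    show "norm (uu q eR p) \<le> norm ((\<lambda>((a,b),c). M a * M b * M c) p)"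
    proof -
      have b: "norm (uu q eR p) \<le> M i * M j * M k"
        using uu_bound[OF q hR, of i j k] unfolding p M_def C_def by simp
      have "norm ((\<lambda>((a,b),c). M a * M b * M c) p) = M i * M j * M k"
        unfolding p using M0 by (simp add: abs_mult abs_of_nonneg)
      then show ?thesis using b by simp
    qed
  qed
  then show ?thesis by (rule Infinite_Sum.abs_summable_summable)
qed


lemma powi_nat: "0 \<le> e \<Longrightarrow> (q::complex) powi e = q ^ nat e"
  by (metis nat_0_le power_int_of_nat)

lemma uu_inner:
  fixes q :: complex and eR :: "nat \<Rightarrow> nat \<Rightarrow> int"
  assumes q: "norm q < 1" and e: "0 \<le> eR i j"
  shows "qpoch_inf (- (q^3)) (q^3) * (q powi eR i j / (qpoch (q^3) (q^3) i * qpoch (q^6) (q^6) j))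
     = infsum (\<lambda>k. uu q eR ((i,j),k)) UNIV"
proof -
  define x where "x = q^3"
  define P where "P = qpoch x x"
  have x: "norm x < 1" unfolding x_def by (rule q3_lt1[OF q])
  have g: "infsum (\<lambda>k. ec x k * (x^j)^k) UNIV = gE x (x^j)"
    unfolding gE_def
    by (rule infsumI[OF norm_summable_imp_has_sum[OF ec_summable[OF x] summable_sums[OF ec_summable'[OF x]]]])
  have tm: "uu q eR ((i,j),k) = (q ^ nat (eR i j) / (P i * P j)) * (ec x k * (x^j)^k)" for k
  proof -
    have "x ^ (tri (Suc k) + j * k) = x ^ tri (Suc k) * (x^j)^k" by (simp add: power_add power_mult)
    then show ?thesis unfolding uu_def ec_def P_def x_def[symmetric] by simp
  qed
  have R: "infsum (\<lambda>k. uu q eR ((i,j),k)) UNIV = (q ^ nat (eR i j) / (P i * P j)) * gE x (x^j)"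
    unfolding tm infsum_cmult_right' g ..
  have qpnz: "qpoch (- x) x j \<noteq> 0" by (rule qp_nz[OF x])
  have L: "qpoch_inf (- x) x = qpoch (- x) x j * gE x (x ^ j)"
    using Pinf_eq(1)[OF x] gE_iter[OF x, of j] by simp
  show ?thesis
    unfolding R q6_split x_def[symmetric] P_def[symmetric] L powi_nat[OF e]
    using qpnz by simp
qed


lemma uu_fiber:
  fixes q :: complex and eR eL :: "nat \<Rightarrow> nat \<Rightarrow> int"
  assumes q: "norm q < 1" and hL: "0 \<le> eL a b"
    and hR: "\<And>i j. 0 \<le> eR i j"
    and h3: "\<And>k. k \<le> a \<Longrightarrow> k \<le> b \<Longrightarrow>
       eR (a-k) (b-k) + 3 * int (tri (Suc k) + (b-k)*k) = eL a b + 3 * int ((a-k)*(b-k))"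
  shows "(\<Sum>k\<le>min a b. uu q eR ((a-k,b-k),k)) = q powi eL a b / (qpoch (q^3) (q^3) a * qpoch (q^3) (q^3) b)"
proof -
  define x where "x = q^3"
  define P where "P = qpoch x x"
  have x: "norm x < 1" unfolding x_def by (rule q3_lt1[OF q])
  have tm: "uu q eR ((a-k,b-k),k) = q ^ nat (eL a b) * (x^((a-k)*(b-k)) / (P (a-k) * P (b-k) * P k))"
    if k: "k \<le> min a b" for k
  proof -
    have "int (nat (eR (a-k) (b-k)) + 3 * (tri (Suc k) + (b-k)*k)) = int (nat (eL a b) + 3 * ((a-k)*(b-k)))"
      using h3[of k] k hR[of "a-k" "b-k"] hL by simp
    then have "nat (eR (a-k) (b-k)) + 3 * (tri (Suc k) + (b-k)*k) = nat (eL a b) + 3 * ((a-k)*(b-k))"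
      by (simp only: of_nat_eq_iff)
    then have "q ^ nat (eR (a-k) (b-k)) * x ^ (tri (Suc k) + (b-k)*k) = q ^ nat (eL a b) * x^((a-k)*(b-k))"
      unfolding x_def power_mult[symmetric] power_add[symmetric] by simp
    then show ?thesis unfolding uu_def P_def x_def[symmetric] by simp
  qed
  have "(\<Sum>k\<le>min a b. uu q eR ((a-k,b-k),k)) =
      q ^ nat (eL a b) * (\<Sum>k\<le>min a b. x^((a-k)*(b-k)) / (P (a-k) * P (b-k) * P k))"
    by (simp add: tm sum_distrib_left)
  also have "\<dots> = q ^ nat (eL a b) * (1 / (P a * P b))"
    unfolding P_def using durfee[OF x] by simp
  finally show ?thesis unfolding powi_nat[OF hL] P_def x_def by simp
qed


lemma main_gen:
  fixes q :: complex and eR eL :: "nat \<Rightarrow> nat \<Rightarrow> int"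
  assumes q: "norm q < 1" and hL: "\<And>a b. 0 \<le> eL a b"
    and hR: "\<And>i j. int (i*(i-1)) + int (j*(j-1)) \<le> 2 * eR i j"
    and h3: "\<And>a b k. k \<le> a \<Longrightarrow> k \<le> b \<Longrightarrow>
       eR (a-k) (b-k) + 3 * int (tri (Suc k) + (b-k)*k) = eL a b + 3 * int ((a-k)*(b-k))"
  shows "(\<Sum>\<^sub>\<infinity>(a,b)\<in>(UNIV :: (nat \<times> nat) set). q powi eL a b / (qpoch (q^3) (q^3) a * qpoch (q^3) (q^3) b))
     = qpoch_inf (- (q^3)) (q^3) * (\<Sum>\<^sub>\<infinity>(i,j)\<in>(UNIV :: (nat \<times> nat) set).
          q powi eR i j / (qpoch (q^3) (q^3) i * qpoch (q^6) (q^6) j))"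
proof -
  have hR0: "0 \<le> eR i j" for i j using hR[of i j] by linarith
  define u where "u = uu q eR"
  have us: "u summable_on UNIV" unfolding u_def by (rule uu_summable[OF q hR])
  define A where "A = Sigma (UNIV :: (nat \<times> nat) set) (\<lambda>(a,b). {..min a b})"
  define g where "g = (\<lambda>((a,b),k). ((a - k, b - k), k :: nat))"
  have bij: "bij_betw g A UNIV"
  proof (rule bij_betw_byWitness[where f' = "\<lambda>((i,j),k). ((i + k, j + k), k)"])
    show "\<forall>p\<in>A. (\<lambda>((i,j),k). ((i + k, j + k), k)) (g p) = p"
      unfolding A_def g_def by auto
    show "\<forall>p\<in>UNIV. g ((\<lambda>((i,j),k). ((i + k, j + k), k)) p) = p"
      unfolding g_def by auto
    show "g ` A \<subseteq> UNIV" by simp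
    show "(\<lambda>((i,j),k). ((i + k, j + k), k)) ` UNIV \<subseteq> A"
      unfolding A_def by auto
  qed
  have usg: "(\<lambda>p. u (g p)) summable_on A"
    using summable_on_reindex_bij_betw[OF bij, of u] us by simp
  have usg': "(\<lambda>(ab,k). u (g (ab,k))) summable_on A"
    using usg by (rule summable_on_cong[THEN iffD1, rotated]) auto
  have "qpoch_inf (- (q^3)) (q^3) * (\<Sum>\<^sub>\<infinity>(i,j)\<in>(UNIV :: (nat \<times> nat) set).
          q powi eR i j / (qpoch (q^3) (q^3) i * qpoch (q^6) (q^6) j))
      = (\<Sum>\<^sub>\<infinity>ij\<in>(UNIV :: (nat \<times> nat) set). qpoch_inf (- (q^3)) (q^3) *
          (case ij of (i,j) \<Rightarrow> q powi eR i j / (qpoch (q^3) (q^3) i * qpoch (q^6) (q^6) j)))"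
    by (rule infsum_cmult_right'[symmetric])
  also have "\<dots> = (\<Sum>\<^sub>\<infinity>ij\<in>(UNIV :: (nat \<times> nat) set). \<Sum>\<^sub>\<infinity>k\<in>UNIV. u (ij, k))"
  proof (rule infsum_cong)
    fix ij :: "nat \<times> nat"
    obtain i j where ij: "ij = (i,j)" by (metis prod.collapse)
    show "qpoch_inf (- (q^3)) (q^3) *
          (case ij of (i,j) \<Rightarrow> q powi eR i j / (qpoch (q^3) (q^3) i * qpoch (q^6) (q^6) j))
        = (\<Sum>\<^sub>\<infinity>k\<in>UNIV. u (ij, k))"
      unfolding ij u_def using uu_inner[OF q hR0] by simp
  qed
  also have "\<dots> = (\<Sum>\<^sub>\<infinity>(ij,k)\<in>Sigma UNIV (\<lambda>_. UNIV). u (ij, k))"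
    by (rule infsum_Sigma'_banach) (use us in simp)
  also have "\<dots> = infsum u UNIV" by simp
  also have "\<dots> = infsum (\<lambda>p. u (g p)) A"
    by (rule infsum_reindex_bij_betw[OF bij, symmetric])
  also have "\<dots> = infsum (\<lambda>(ab,k). u (g (ab, k))) A" by (rule infsum_cong) auto
  also have "\<dots> = (\<Sum>\<^sub>\<infinity>ab\<in>(UNIV :: (nat \<times> nat) set). \<Sum>\<^sub>\<infinity>k\<in>(case ab of (a,b) \<Rightarrow> {..min a b}). u (g (ab, k)))"
    unfolding A_def
    by (rule infsum_Sigma'_banach[where f = "\<lambda>ab k. u (g (ab, k))", symmetric])
       (use usg' in \<open>simp add: A_def\<close>)
  also have "\<dots> = (\<Sum>\<^sub>\<infinity>(a,b)\<in>(UNIV :: (nat \<times> nat) set). q powi eL a b / (qpoch (q^3) (q^3) a * qpoch (q^3) (q^3) b))"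
  proof (rule infsum_cong)
    fix ab :: "nat \<times> nat"
    obtain a b where ab: "ab = (a,b)" by (metis prod.collapse)
    have "(\<Sum>k\<le>min a b. uu q eR ((a-k,b-k),k)) = q powi eL a b / (qpoch (q^3) (q^3) a * qpoch (q^3) (q^3) b)"
      by (rule uu_fiber[where q=q and eL=eL and eR=eR and a=a and b=b, OF q hL hR0 h3])
    then show "(\<Sum>\<^sub>\<infinity>k\<in>(case ab of (a,b) \<Rightarrow> {..min a b}). u (g (ab, k))) =
        (case ab of (a,b) \<Rightarrow> q powi eL a b / (qpoch (q^3) (q^3) a * qpoch (q^3) (q^3) b))"
      unfolding ab u_def g_def by simp
  qed
  finally show ?thesis ..
qed


lemma evdiv1: "((n::int) * (n - 1)) div 2 * 2 = n * (n - 1)"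
proof -
  have "even (n * (n - 1))" by auto
  then show ?thesis by simp
qed

lemma evdiv2: "((n::int) * (n + 3)) div 2 * 2 = n * (n + 3)"
proof -
  have "even (n * (n + 3))" by auto
  then show ?thesis by simp
qed

lemma mm1: "0 \<le> (m::int) * (m - 1)"
proof (cases "m \<le> 0")
  case True then show ?thesis by (intro mult_nonpos_nonpos) auto
next
  case False then show ?thesis by (intro mult_nonneg_nonneg) auto
qed

lemma int_nn1: "int (n * (n - 1)) = int n * (int n - 1)"
  by (cases n) (auto simp: algebra_simps)

lemma int_tri: "int (tri (Suc k)) * 2 = int k * (int k + 1)"
proof -
  have "2 * tri (Suc k) = Suc k * k" using two_tri[of "Suc k"] by simp
  then have "int (2 * tri (Suc k)) = int (Suc k * k)" by simp
  then show ?thesis by (simp add: algebra_simps)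
qed

lemma S1_eq:
  fixes q :: complex assumes q: "norm q < 1"
  shows "S1 q = qpoch_inf (- (q^3)) (q^3) *
           (\<Sum>\<^sub>\<infinity>(i,j)\<in>(UNIV :: (nat \<times> nat) set).
              q powi ((int i * (int i - 1)) div 2 + 2 * int i * int j + 2 * (int j)^2 + 2 * int j)
              / (qpoch (q^3) (q^3) i * qpoch (q^6) (q^6) j))"
  unfolding S1_def
proof (rule main_gen[OF q])
  fix a b :: nat
  define D where "D = (int a * (int a - 1)) div 2"
  have d: "D * 2 = int a * (int a - 1)" unfolding D_def by (rule evdiv1)
  have m: "0 \<le> (int a - int b) * (int a - int b - 1)" by (rule mm1)
  have "2 * (D - int a * int b + 2 * (int b)^2 + 2 * int b) =
      (int a - int b) * (int a - int b - 1) + 3 * (int b)^2 + 3 * int b"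
    using d by algebra
  then show "0 \<le> (int a * (int a - 1)) div 2 - int a * int b + 2 * (int b)^2 + 2 * int b"
    unfolding D_def[symmetric] using m by (smt (verit) zero_le_power2 of_nat_0_le_iff)
next
  fix i j :: nat
  define D where "D = (int i * (int i - 1)) div 2"
  have d: "D * 2 = int i * (int i - 1)" unfolding D_def by (rule evdiv1)
  have n: "0 \<le> int i * int j" "0 \<le> (int j)^2" by auto
  have e: "2 * (D + 2 * int i * int j + 2 * (int j)^2 + 2 * int j) - (int i * (int i - 1) + int j * (int j - 1))
      = 4 * (int i * int j) + 3 * (int j)^2 + 5 * int j" using d by algebra
  show "int (i * (i - 1)) + int (j * (j - 1)) \<le>
      2 * ((int i * (int i - 1)) div 2 + 2 * int i * int j + 2 * (int j)^2 + 2 * int j)"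
    unfolding int_nn1 D_def[symmetric] using e n by linarith
next
  fix a b k :: nat assume ka: "k \<le> a" and kb: "k \<le> b"
  define D where "D = (int a * (int a - 1)) div 2"
  have d: "D * 2 = int a * (int a - 1)" unfolding D_def by (rule evdiv1)
  define D' where "D' = (int (a-k) * (int (a-k) - 1)) div 2"
  have d': "D' * 2 = int (a-k) * (int (a-k) - 1)" unfolding D'_def by (rule evdiv1)
  have ak: "int (a - k) = int a - int k" and bk: "int (b - k) = int b - int k" using ka kb by auto
  have t: "int (tri (Suc k)) * 2 = int k * (int k + 1)" by (rule int_tri)
  have "2 * (D' + 2 * int (a-k) * int (b-k) + 2 * (int (b-k))^2 + 2 * int (b-k)
         + 3 * (int (tri (Suc k)) + int (b-k) * int k))
      = 2 * (D - int a * int b + 2 * (int b)^2 + 2 * int b + 3 * (int (a-k) * int (b-k)))"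
    using d d' t unfolding ak bk by algebra
  then show "(int (a - k) * (int (a - k) - 1)) div 2 + 2 * int (a - k) * int (b - k) + 2 * (int (b - k))^2 + 2 * int (b - k)
      + 3 * int (tri (Suc k) + (b - k) * k) =
      (int a * (int a - 1)) div 2 - int a * int b + 2 * (int b)^2 + 2 * int b + 3 * int ((a - k) * (b - k))"
    unfolding D_def[symmetric] D'_def[symmetric] by simp
qed


lemma S2_eq:
  fixes q :: complex assumes q: "norm q < 1"
  shows "S2 q = qpoch_inf (- (q^3)) (q^3) *
           (\<Sum>\<^sub>\<infinity>(i,j)\<in>(UNIV :: (nat \<times> nat) set).
              q powi ((int i * (int i + 3)) div 2 + 2 * int i * int j + 2 * (int j)^2)
              / (qpoch (q^3) (q^3) i * qpoch (q^6) (q^6) j))"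
  unfolding S2_def
proof (rule main_gen[OF q])
  fix a b :: nat
  define D where "D = (int a * (int a + 3)) div 2"
  have d: "D * 2 = int a * (int a + 3)" unfolding D_def by (rule evdiv2)
  have m: "0 \<le> (int a - int b)^2" "0 \<le> (int b)^2" "0 \<le> int a" by auto
  have e: "2 * (D - int a * int b + 2 * (int b)^2) = (int a - int b)^2 + 3 * int a + 3 * (int b)^2"
    using d by algebra
  have "0 \<le> 2 * (D - int a * int b + 2 * (int b)^2)" unfolding e using m by simp
  then show "0 \<le> (int a * (int a + 3)) div 2 - int a * int b + 2 * (int b)^2"
    unfolding D_def[symmetric] by simp
next
  fix i j :: nat
  define D where "D = (int i * (int i + 3)) div 2"
  have d: "D * 2 = int i * (int i + 3)" unfolding D_def by (rule evdiv2)
  have n: "0 \<le> int i * int j" "0 \<le> (int j)^2" by auto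
  have e: "2 * (D + 2 * int i * int j + 2 * (int j)^2) - (int i * (int i - 1) + int j * (int j - 1))
      = 4 * int i + 4 * (int i * int j) + 3 * (int j)^2 + int j" using d by algebra
  show "int (i * (i - 1)) + int (j * (j - 1)) \<le>
      2 * ((int i * (int i + 3)) div 2 + 2 * int i * int j + 2 * (int j)^2)"
    unfolding int_nn1 D_def[symmetric] using e n by linarith
next
  fix a b k :: nat assume ka: "k \<le> a" and kb: "k \<le> b"
  define D where "D = (int a * (int a + 3)) div 2"
  have d: "D * 2 = int a * (int a + 3)" unfolding D_def by (rule evdiv2)
  define D' where "D' = (int (a-k) * (int (a-k) + 3)) div 2"
  have d': "D' * 2 = int (a-k) * (int (a-k) + 3)" unfolding D'_def by (rule evdiv2)
  have ak: "int (a - k) = int a - int k" and bk: "int (b - k) = int b - int k" using ka kb by auto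
  have t: "int (tri (Suc k)) * 2 = int k * (int k + 1)" by (rule int_tri)
  have "2 * (D' + 2 * int (a-k) * int (b-k) + 2 * (int (b-k))^2
         + 3 * (int (tri (Suc k)) + int (b-k) * int k))
      = 2 * (D - int a * int b + 2 * (int b)^2 + 3 * (int (a-k) * int (b-k)))"
    using d d' t unfolding ak bk by algebra
  then show "(int (a - k) * (int (a - k) + 3)) div 2 + 2 * int (a - k) * int (b - k) + 2 * (int (b - k))^2
      + 3 * int (tri (Suc k) + (b - k) * k) =
      (int a * (int a + 3)) div 2 - int a * int b + 2 * (int b)^2 + 3 * int ((a - k) * (b - k))"
    unfolding D_def[symmetric] D'_def[symmetric] by simp
qed

theorem mainTheorem4:
  fixes q :: complex
  assumes "norm q < 1"
  shows "(S1 q = qpoch_inf (- (q^3)) (q^3) *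
           (\<Sum>\<^sub>\<infinity>(i,j)\<in>(UNIV :: (nat \<times> nat) set).
              q powi ((int i * (int i - 1)) div 2 + 2 * int i * int j + 2 * (int j)^2 + 2 * int j)
              / (qpoch (q^3) (q^3) i * qpoch (q^6) (q^6) j)))
    \<and> (S2 q = qpoch_inf (- (q^3)) (q^3) *
           (\<Sum>\<^sub>\<infinity>(i,j)\<in>(UNIV :: (nat \<times> nat) set).
              q powi ((int i * (int i + 3)) div 2 + 2 * int i * int j + 2 * (int j)^2)
              / (qpoch (q^3) (q^3) i * qpoch (q^6) (q^6) j)))"
  using S1_eq[OF assms] S2_eq[OF assms] by simp

end
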